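(* Consider the following Markov decision problem with a finite horizon of $N\ge 1$ decision epochs. The state space is $[0,\infty)\times[0,\infty)$ and at every state the action set is $\{0,1\}$. In state $\xi=(\xi_1,\xi_2)$, taking action $a\in\{0,1\}$ yields the (time-homogeneous) reward $r(\xi,a)=\xi_{1+a}$. The next state $\xi'$ is obtained as follows: if $a=1$ then $\xi'=(\xi_1+\zeta,\xi_2)$ with $\zeta$ having density $p_1$; if $a=0$ then $\xi'=(\xi_1,\xi_2+\zeta)$ with $\zeta$ having density $p_2$. Here $p_1,p_2$ are probability densities on $[0,\infty)$ with respect to a $\sigma$-finite measure $\lambda$, having a common finite mean $\theta$. Then the greedy policy, which takes action $1$ when $\xi_1<\xi_2$ and action $0$ when $\xi_1>\xi_2$ (with either action allowed when $\xi_1=\xi_2$), is optimal under the total expected reward criterion: for every $N\ge1$ and every initial state, it attains the maximum expected total reward over $N$ epochs among all policies.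
   Context: In the application of the paper, $\xi=(\Gamma_{\mathbf R}[R(n)],\Gamma_{\mathbf S}[S(n)])$, action $1$ means reading the next record from source $\mathbf R$, and the reward is the expected number of new matches; but the claim is the abstract statement above. "Policies" means general (history-dependent, possibly randomized) Markov decision policies. *)

theory Defs
  imports "HOL-Probability.Probability"
begin

text \<open>States are pairs of reals (the state space is [0,oo) x [0,oo)); actions are
  booleans, True = action 1, False = action 0.
  A history at decision epoch t consists of the past states xi_0 .. xi_(t-1),
  stored in positions less than t of a function hs, and the past actions a_0 .. a_(t-1),
  stored in positions less than t of a function ha (positions beyond t carry fixed
  default values). A general (history-dependent, randomized) policy assigns to each
  epoch t, history (hs, ha) and current state xi the probability of choosing action 1.\<close>

type_synonym state = "real \<times> real"
type_synonym policy = "nat \<Rightarrow> (nat \<Rightarrow> state) \<Rightarrow> (nat \<Rightarrow> bool) \<Rightarrow> state \<Rightarrow> real"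

definition history_space :: "((nat \<Rightarrow> state) \<times> (nat \<Rightarrow> bool)) measure" where
  "history_space = PiM UNIV (\<lambda>_. borel) \<Otimes>\<^sub>M PiM UNIV (\<lambda>_. count_space UNIV)"

definition admissible_policy :: "policy \<Rightarrow> bool" where
  "admissible_policy \<pi> \<longleftrightarrow>
     (\<forall>t hs ha \<xi>. 0 \<le> \<pi> t hs ha \<xi> \<and> \<pi> t hs ha \<xi> \<le> 1) \<and>
     (\<forall>t. (\<lambda>(h, \<xi>). \<pi> t (fst h) (snd h) \<xi>) \<in> borel_measurable (history_space \<Otimes>\<^sub>M borel))"

definition reward :: "state \<Rightarrow> bool \<Rightarrow> real" where
  "reward \<xi> a = (if a then snd \<xi> else fst \<xi>)"

text \<open>Expected total reward of the remaining n epochs, starting at epoch t with history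
  (hs, ha) in state xi, when following policy pi.\<close>
primrec val :: "real measure \<Rightarrow> (real \<Rightarrow> real) \<Rightarrow> (real \<Rightarrow> real) \<Rightarrow> policy \<Rightarrow>
    nat \<Rightarrow> nat \<Rightarrow> (nat \<Rightarrow> state) \<Rightarrow> (nat \<Rightarrow> bool) \<Rightarrow> state \<Rightarrow> ennreal" where
  "val lam p1 p2 \<pi> 0 t hs ha \<xi> = 0"
| "val lam p1 p2 \<pi> (Suc n) t hs ha \<xi> =
     ennreal (\<pi> t hs ha \<xi>) *
       (ennreal (reward \<xi> True) +
        (\<integral>\<^sup>+ z\<in>{0..}. ennreal (p1 z) *
            val lam p1 p2 \<pi> n (Suc t) (hs(t := \<xi>)) (ha(t := True)) (fst \<xi> + z, snd \<xi>) \<partial>lam))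
   + ennreal (1 - \<pi> t hs ha \<xi>) *
       (ennreal (reward \<xi> False) +
        (\<integral>\<^sup>+ z\<in>{0..}. ennreal (p2 z) *
            val lam p1 p2 \<pi> n (Suc t) (hs(t := \<xi>)) (ha(t := False)) (fst \<xi>, snd \<xi> + z) \<partial>lam))"

definition total_reward :: "real measure \<Rightarrow> (real \<Rightarrow> real) \<Rightarrow> (real \<Rightarrow> real) \<Rightarrow> policy \<Rightarrow>
    nat \<Rightarrow> state \<Rightarrow> ennreal" where
  "total_reward lam p1 p2 \<pi> N \<xi>0 = val lam p1 p2 \<pi> N 0 (\<lambda>_. (0, 0)) (\<lambda>_. False) \<xi>0"

definition density_with_mean :: "real measure \<Rightarrow> (real \<Rightarrow> real) \<Rightarrow> real \<Rightarrow> bool" where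
  "density_with_mean lam p \<theta> \<longleftrightarrow>
     p \<in> borel_measurable borel \<and> (\<forall>x\<ge>0. 0 \<le> p x) \<and>
     (\<integral>\<^sup>+ x\<in>{0..}. ennreal (p x) \<partial>lam) = 1 \<and>
     (\<integral>\<^sup>+ x\<in>{0..}. ennreal (x * p x) \<partial>lam) = ennreal \<theta>"

definition greedy_policy :: "policy \<Rightarrow> bool" where
  "greedy_policy g \<longleftrightarrow> admissible_policy g \<and>
     (\<forall>t hs ha \<xi>. (fst \<xi> < snd \<xi> \<longrightarrow> g t hs ha \<xi> = 1) \<and>
                  (fst \<xi> > snd \<xi> \<longrightarrow> g t hs ha \<xi> = 0))"

end

theory Submission imports Defs begin

primrec W :: "real measure \<Rightarrow> (real \<Rightarrow> real) \<Rightarrow> (real \<Rightarrow> real) \<Rightarrow> nat \<Rightarrow> state \<Rightarrow> ennreal" where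
  "W lam p1 p2 0 \<xi> = 0"
| "W lam p1 p2 (Suc n) \<xi> = max
     (ennreal (snd \<xi>) + (\<integral>\<^sup>+ z\<in>{0..}. ennreal (p1 z) * W lam p1 p2 n (fst \<xi> + z, snd \<xi>) \<partial>lam))
     (ennreal (fst \<xi>) + (\<integral>\<^sup>+ z\<in>{0..}. ennreal (p2 z) * W lam p1 p2 n (fst \<xi>, snd \<xi> + z) \<partial>lam))"

definition Q1 :: "real measure \<Rightarrow> (real \<Rightarrow> real) \<Rightarrow> (real \<Rightarrow> real) \<Rightarrow> nat \<Rightarrow> state \<Rightarrow> ennreal" where
  "Q1 lam p1 p2 n \<xi> = ennreal (snd \<xi>) + (\<integral>\<^sup>+ z\<in>{0..}. ennreal (p1 z) * W lam p1 p2 n (fst \<xi> + z, snd \<xi>) \<partial>lam)"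

definition Q0 :: "real measure \<Rightarrow> (real \<Rightarrow> real) \<Rightarrow> (real \<Rightarrow> real) \<Rightarrow> nat \<Rightarrow> state \<Rightarrow> ennreal" where
  "Q0 lam p1 p2 n \<xi> = ennreal (fst \<xi>) + (\<integral>\<^sup>+ z\<in>{0..}. ennreal (p2 z) * W lam p1 p2 n (fst \<xi>, snd \<xi> + z) \<partial>lam)"

lemma W_Suc': "W lam p1 p2 (Suc n) \<xi> = max (Q1 lam p1 p2 n \<xi>) (Q0 lam p1 p2 n \<xi>)"
  by (simp add: Q1_def Q0_def)

lemma W_swap: "W lam p1 p2 n (a, b) = W lam p2 p1 n (b, a)"
  by (induction n arbitrary: a b) (simp_all add: max.commute)

lemma Q_swap: "Q0 lam p1 p2 n (a, b) = Q1 lam p2 p1 n (b, a)"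
  by (simp add: Q1_def Q0_def W_swap[of lam p1 p2])

lemma Q_swap2: "Q1 lam p1 p2 n (a, b) = Q0 lam p2 p1 n (b, a)"
  by (simp add: Q1_def Q0_def W_swap[of lam p1 p2])

lemma int_meas:
  assumes sl: "sets lam = sets borel" and sf: "sigma_finite_measure lam"
    and f: "case_prod f \<in> borel_measurable (N \<Otimes>\<^sub>M borel)"
  shows "(\<lambda>x. \<integral>\<^sup>+ y. f x y \<partial>lam) \<in> borel_measurable N"
proof -
  interpret sigma_finite_measure lam by fact
  have "measurable (N \<Otimes>\<^sub>M lam) (borel :: ennreal measure) = measurable (N \<Otimes>\<^sub>M borel) borel"
    by (rule measurable_cong_sets[OF sets_pair_measure_cong[OF refl sl] refl])
  with f show ?thesis by (intro borel_measurable_nn_integral) simp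
qed

lemma W_meas:
  assumes sl: "sets lam = sets borel" and sf: "sigma_finite_measure lam"
    and [measurable]: "p1 \<in> borel_measurable borel" "p2 \<in> borel_measurable borel"
  shows "W lam p1 p2 n \<in> borel_measurable (borel \<Otimes>\<^sub>M borel)"
proof (induction n)
  case 0 then show ?case by simp
next
  case (Suc n)
  note [measurable] = Suc.IH
  have [measurable]: "(\<lambda>\<xi>. \<integral>\<^sup>+ z\<in>{0..}. ennreal (p1 z) * W lam p1 p2 n (fst \<xi> + z, snd \<xi>) \<partial>lam) \<in> borel_measurable (borel \<Otimes>\<^sub>M borel)"
    by (rule int_meas[OF sl sf]) measurable
  have [measurable]: "(\<lambda>\<xi>. \<integral>\<^sup>+ z\<in>{0..}. ennreal (p2 z) * W lam p1 p2 n (fst \<xi>, snd \<xi> + z) \<partial>lam) \<in> borel_measurable (borel \<Otimes>\<^sub>M borel)"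
    by (rule int_meas[OF sl sf]) measurable
  show ?case unfolding W.simps by measurable
qed

lemma lin:
  assumes sl: "sets lam = sets borel" and d: "density_with_mean lam p \<theta>" and a: "a \<ge> 0"
    and F[measurable]: "F \<in> borel_measurable borel"
  shows "(\<integral>\<^sup>+ z\<in>{0..}. ennreal (p z) * (ennreal (a + z) + F z) \<partial>lam)
       = ennreal a + ennreal \<theta> + (\<integral>\<^sup>+ z\<in>{0..}. ennreal (p z) * F z \<partial>lam)"
proof -
  from d have pm[measurable]: "p \<in> borel_measurable borel" and p0: "\<And>x. x \<ge> 0 \<Longrightarrow> 0 \<le> p x"
    and i1: "(\<integral>\<^sup>+ x\<in>{0..}. ennreal (p x) \<partial>lam) = 1"
    and i2: "(\<integral>\<^sup>+ x\<in>{0..}. ennreal (x * p x) \<partial>lam) = ennreal \<theta>"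
    unfolding density_with_mean_def by auto
  have ml: "measurable lam (borel :: ennreal measure) = measurable borel borel"
    by (rule measurable_cong_sets[OF sl refl])
  have eq: "\<And>z. ennreal (p z) * (ennreal (a + z) + F z) * indicator {0..} z
     = ennreal a * (ennreal (p z) * indicator {0..} z) + ennreal (z * p z) * indicator {0..} z
       + ennreal (p z) * F z * indicator {0..} z"
  proof -
    fix z :: real
    show "?thesis z"
    proof (cases "z \<ge> 0")
      case True
      then show ?thesis using a p0[OF True]
        by (simp add: ennreal_plus ennreal_mult distrib_left mult_ac)
    qed simp
  qed
  have "(\<integral>\<^sup>+ z\<in>{0..}. ennreal (p z) * (ennreal (a + z) + F z) \<partial>lam)
      = (\<integral>\<^sup>+ z. ennreal a * (ennreal (p z) * indicator {0..} z) + ennreal (z * p z) * indicator {0..} z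
       + ennreal (p z) * F z * indicator {0..} z \<partial>lam)"
    by (simp only: eq)
  also have "\<dots> = (\<integral>\<^sup>+ z. ennreal a * (ennreal (p z) * indicator {0..} z) \<partial>lam)
      + (\<integral>\<^sup>+ z. ennreal (z * p z) * indicator {0..} z \<partial>lam)
      + (\<integral>\<^sup>+ z. ennreal (p z) * F z * indicator {0..} z \<partial>lam)"
    by (subst nn_integral_add, unfold ml, measurable, subst nn_integral_add, unfold ml, measurable)
  also have "\<dots> = ennreal a + ennreal \<theta> + (\<integral>\<^sup>+ z\<in>{0..}. ennreal (p z) * F z \<partial>lam)"
    by (subst nn_integral_cmult, unfold ml, measurable) (simp add: i1 i2)
  finally show ?thesis .
qed

lemma swap:
  fixes p1 p2 :: "real \<Rightarrow> real" and G :: "state \<Rightarrow> ennreal" and a b :: real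
  assumes sl: "sets lam = sets borel" and sf: "sigma_finite_measure lam"
    and [measurable]: "p1 \<in> borel_measurable borel" "p2 \<in> borel_measurable borel"
    and [measurable]: "G \<in> borel_measurable (borel \<Otimes>\<^sub>M borel)"
  shows "(\<integral>\<^sup>+ y\<in>{0..}. ennreal (p2 y) * (\<integral>\<^sup>+ x\<in>{0..}. ennreal (p1 x) * G (a + x, b + y) \<partial>lam) \<partial>lam)
       = (\<integral>\<^sup>+ x\<in>{0..}. ennreal (p1 x) * (\<integral>\<^sup>+ y\<in>{0..}. ennreal (p2 y) * G (a + x, b + y) \<partial>lam) \<partial>lam)"
proof -
  have ml: "measurable lam (borel :: ennreal measure) = measurable borel borel"
    by (rule measurable_cong_sets[OF sl refl])
  have ml2: "measurable (lam \<Otimes>\<^sub>M lam) (borel :: ennreal measure) = measurable (borel \<Otimes>\<^sub>M borel) borel"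
    by (rule measurable_cong_sets[OF sets_pair_measure_cong[OF sl sl] refl])
  define f where "f x y = ennreal (p1 x) * indicator {0..} x * (ennreal (p2 y) * indicator {0..} y) * G (a + x, b + y)" for x y
  have fm0: "(\<lambda>(x,y). ennreal (p1 x) * indicator {0..} x * (ennreal (p2 y) * indicator {0..} y) * G (a + x, b + y)) \<in> borel_measurable (borel \<Otimes>\<^sub>M borel)"
    by measurable
  have fm: "case_prod f \<in> borel_measurable (lam \<Otimes>\<^sub>M lam)"
    unfolding ml2 f_def using fm0 by simp
  interpret pair_sigma_finite lam lam by (simp add: pair_sigma_finite_def sf)
  have L: "(\<integral>\<^sup>+ y\<in>{0..}. ennreal (p2 y) * (\<integral>\<^sup>+ x\<in>{0..}. ennreal (p1 x) * G (a + x, b + y) \<partial>lam) \<partial>lam)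
      = (\<integral>\<^sup>+ y. (\<integral>\<^sup>+ x. f x y \<partial>lam) \<partial>lam)"
  proof (rule nn_integral_cong)
    fix y
    have "ennreal (p2 y) * (\<integral>\<^sup>+ x\<in>{0..}. ennreal (p1 x) * G (a + x, b + y) \<partial>lam) * indicator {0..} y
      = (ennreal (p2 y) * indicator {0..} y) * (\<integral>\<^sup>+ x\<in>{0..}. ennreal (p1 x) * G (a + x, b + y) \<partial>lam)"
      by (simp add: mult_ac)
    also have "\<dots> = (\<integral>\<^sup>+ x. f x y \<partial>lam)"
      by (subst nn_integral_cmult[symmetric], unfold ml, measurable) (auto simp: f_def mult_ac intro!: nn_integral_cong)
    finally show "ennreal (p2 y) * (\<integral>\<^sup>+ x\<in>{0..}. ennreal (p1 x) * G (a + x, b + y) \<partial>lam) * indicator {0..} y = (\<integral>\<^sup>+ x. f x y \<partial>lam)" .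
  qed
  have R: "(\<integral>\<^sup>+ x\<in>{0..}. ennreal (p1 x) * (\<integral>\<^sup>+ y\<in>{0..}. ennreal (p2 y) * G (a + x, b + y) \<partial>lam) \<partial>lam)
      = (\<integral>\<^sup>+ x. (\<integral>\<^sup>+ y. f x y \<partial>lam) \<partial>lam)"
  proof (rule nn_integral_cong)
    fix x
    have "ennreal (p1 x) * (\<integral>\<^sup>+ y\<in>{0..}. ennreal (p2 y) * G (a + x, b + y) \<partial>lam) * indicator {0..} x
      = (ennreal (p1 x) * indicator {0..} x) * (\<integral>\<^sup>+ y\<in>{0..}. ennreal (p2 y) * G (a + x, b + y) \<partial>lam)"
      by (simp add: mult_ac)
    also have "\<dots> = (\<integral>\<^sup>+ y. f x y \<partial>lam)"
      by (subst nn_integral_cmult[symmetric], unfold ml, measurable) (auto simp: f_def mult_ac intro!: nn_integral_cong)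
    finally show "ennreal (p1 x) * (\<integral>\<^sup>+ y\<in>{0..}. ennreal (p2 y) * G (a + x, b + y) \<partial>lam) * indicator {0..} x = (\<integral>\<^sup>+ y. f x y \<partial>lam)" .
  qed
  show ?thesis unfolding L R by (rule Fubini'[OF fm])
qed

lemma main:
  fixes p1 p2 :: "real \<Rightarrow> real"
  assumes sl: "sets lam = sets borel" and sf: "sigma_finite_measure lam"
    and d1: "density_with_mean lam p1 \<theta>" and d2: "density_with_mean lam p2 \<theta>"
  shows "0 \<le> a \<Longrightarrow> a \<le> b \<Longrightarrow> Q0 lam p1 p2 n (a, b) \<le> Q1 lam p1 p2 n (a, b)"
proof (induction n arbitrary: a b)
  case 0 then show ?case by (simp add: Q0_def Q1_def ennreal_leI)
next
  case (Suc m)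
  have pm1[measurable]: "p1 \<in> borel_measurable borel" using d1 unfolding density_with_mean_def by auto
  have pm2[measurable]: "p2 \<in> borel_measurable borel" using d2 unfolding density_with_mean_def by auto
  note Wm[measurable] = W_meas[OF sl sf pm1 pm2]
  have WQ1: "W lam p1 p2 (Suc m) (a, b + y) = Q1 lam p1 p2 m (a, b + y)" if "y \<ge> 0" for y
    using Suc.IH[of a "b + y"] Suc.prems that by (simp del: W.simps add: W_Suc' max_absorb1)
  have m1: "(\<lambda>y. \<integral>\<^sup>+ x\<in>{0..}. ennreal (p1 x) * W lam p1 p2 m (a + x, b + y) \<partial>lam) \<in> borel_measurable borel"
    by (rule int_meas[OF sl sf]) measurable
  have m2: "(\<lambda>x. \<integral>\<^sup>+ y\<in>{0..}. ennreal (p2 y) * W lam p1 p2 m (a + x, b + y) \<partial>lam) \<in> borel_measurable borel"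
    by (rule int_meas[OF sl sf]) measurable
  have "Q0 lam p1 p2 (Suc m) (a, b) = ennreal a + (\<integral>\<^sup>+ y\<in>{0..}. ennreal (p2 y) * Q1 lam p1 p2 m (a, b + y) \<partial>lam)"
    unfolding Q0_def by (auto simp del: W.simps simp: WQ1 intro!: nn_integral_cong split: split_indicator)
  also have "\<dots> = ennreal a + (\<integral>\<^sup>+ y\<in>{0..}. ennreal (p2 y) * (ennreal (b + y)
      + (\<integral>\<^sup>+ x\<in>{0..}. ennreal (p1 x) * W lam p1 p2 m (a + x, b + y) \<partial>lam)) \<partial>lam)"
    by (simp add: Q1_def add.commute)
  also have "\<dots> = ennreal a + (ennreal b + ennreal \<theta> + (\<integral>\<^sup>+ y\<in>{0..}. ennreal (p2 y) *
      (\<integral>\<^sup>+ x\<in>{0..}. ennreal (p1 x) * W lam p1 p2 m (a + x, b + y) \<partial>lam) \<partial>lam))"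
    using Suc.prems by (subst lin[OF sl d2 _ m1]) auto
  also have "\<dots> = ennreal b + (ennreal a + ennreal \<theta> + (\<integral>\<^sup>+ x\<in>{0..}. ennreal (p1 x) *
      (\<integral>\<^sup>+ y\<in>{0..}. ennreal (p2 y) * W lam p1 p2 m (a + x, b + y) \<partial>lam) \<partial>lam))"
    by (subst swap[OF sl sf pm1 pm2 Wm]) (simp add: add_ac)
  also have "\<dots> = ennreal b + (\<integral>\<^sup>+ x\<in>{0..}. ennreal (p1 x) * (ennreal (a + x)
      + (\<integral>\<^sup>+ y\<in>{0..}. ennreal (p2 y) * W lam p1 p2 m (a + x, b + y) \<partial>lam)) \<partial>lam)"
    using Suc.prems by (subst lin[OF sl d1 _ m2]) auto
  also have "\<dots> = ennreal b + (\<integral>\<^sup>+ x\<in>{0..}. ennreal (p1 x) * Q0 lam p1 p2 m (a + x, b) \<partial>lam)"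
    by (simp add: Q0_def)
  also have "\<dots> \<le> ennreal b + (\<integral>\<^sup>+ x\<in>{0..}. ennreal (p1 x) * W lam p1 p2 (Suc m) (a + x, b) \<partial>lam)"
    by (intro add_left_mono nn_integral_mono mult_right_mono mult_left_mono) (auto simp del: W.simps simp: W_Suc')
  also have "\<dots> = Q1 lam p1 p2 (Suc m) (a, b)"
    by (simp add: Q1_def)
  finally show ?case .
qed

lemma convex_le:
  fixes q :: real and x y M :: ennreal
  assumes "0 \<le> q" "q \<le> 1" "x \<le> M" "y \<le> M"
  shows "ennreal q * x + ennreal (1 - q) * y \<le> M"
proof -
  have "ennreal q * x + ennreal (1 - q) * y \<le> ennreal q * M + ennreal (1 - q) * M"
    using assms by (intro add_mono mult_left_mono) auto
  also have "\<dots> = (ennreal q + ennreal (1 - q)) * M" by (simp add: distrib_right)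
  also have "\<dots> = M" using assms by (simp add: ennreal_plus[symmetric])
  finally show ?thesis .
qed

lemma upper:
  assumes adm: "admissible_policy \<pi>"
  shows "val lam p1 p2 \<pi> n t hs ha \<xi> \<le> W lam p1 p2 n \<xi>"
proof (induction n arbitrary: t hs ha \<xi>)
  case 0 then show ?case by simp
next
  case (Suc n)
  have q: "0 \<le> \<pi> t hs ha \<xi>" "\<pi> t hs ha \<xi> \<le> 1" using adm unfolding admissible_policy_def by blast+
  have A: "ennreal (reward \<xi> True) + (\<integral>\<^sup>+ z\<in>{0..}. ennreal (p1 z) *
            val lam p1 p2 \<pi> n (Suc t) (hs(t := \<xi>)) (ha(t := True)) (fst \<xi> + z, snd \<xi>) \<partial>lam)
        \<le> Q1 lam p1 p2 n \<xi>"
    unfolding Q1_def reward_def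
    by (auto intro!: add_left_mono nn_integral_mono mult_right_mono mult_left_mono Suc.IH)
  have B: "ennreal (reward \<xi> False) + (\<integral>\<^sup>+ z\<in>{0..}. ennreal (p2 z) *
            val lam p1 p2 \<pi> n (Suc t) (hs(t := \<xi>)) (ha(t := False)) (fst \<xi>, snd \<xi> + z) \<partial>lam)
        \<le> Q0 lam p1 p2 n \<xi>"
    unfolding Q0_def reward_def
    by (auto intro!: add_left_mono nn_integral_mono mult_right_mono mult_left_mono Suc.IH)
  show ?case
    unfolding val.simps W_Suc'
    by (rule convex_le[OF q order_trans[OF A max.cobounded1] order_trans[OF B max.cobounded2]])
qed

lemma lower:
  fixes p1 p2 :: "real \<Rightarrow> real"
  assumes sl: "sets lam = sets borel" and sf: "sigma_finite_measure lam"
    and d1: "density_with_mean lam p1 \<theta>" and d2: "density_with_mean lam p2 \<theta>"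
    and gr: "greedy_policy g"
  shows "0 \<le> fst \<xi> \<Longrightarrow> 0 \<le> snd \<xi> \<Longrightarrow> W lam p1 p2 n \<xi> \<le> val lam p1 p2 g n t hs ha \<xi>"
proof (induction n arbitrary: t hs ha \<xi>)
  case 0 then show ?case by simp
next
  case (Suc n)
  obtain a b where ab: "\<xi> = (a, b)" by force
  have a: "0 \<le> a" and b: "0 \<le> b" using Suc.prems ab by auto
  let ?q = "g t hs ha \<xi>"
  have gadm: "admissible_policy g" and gg: "\<And>t hs ha \<xi>. (fst \<xi> < snd \<xi> \<longrightarrow> g t hs ha \<xi> = 1) \<and> (fst \<xi> > snd \<xi> \<longrightarrow> g t hs ha \<xi> = 0)"
    using gr unfolding greedy_policy_def by blast+
  have q: "0 \<le> ?q" "?q \<le> 1" using gadm unfolding admissible_policy_def by blast+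
  have A: "Q1 lam p1 p2 n \<xi> \<le> ennreal (reward \<xi> True) + (\<integral>\<^sup>+ z\<in>{0..}. ennreal (p1 z) *
            val lam p1 p2 g n (Suc t) (hs(t := \<xi>)) (ha(t := True)) (fst \<xi> + z, snd \<xi>) \<partial>lam)"
  proof -
    have "(\<integral>\<^sup>+ z\<in>{0..}. ennreal (p1 z) * W lam p1 p2 n (fst \<xi> + z, snd \<xi>) \<partial>lam) \<le> (\<integral>\<^sup>+ z\<in>{0..}. ennreal (p1 z) *
            val lam p1 p2 g n (Suc t) (hs(t := \<xi>)) (ha(t := True)) (fst \<xi> + z, snd \<xi>) \<partial>lam)"
    proof (rule nn_integral_mono)
      fix x
      show "ennreal (p1 x) * W lam p1 p2 n (fst \<xi> + x, snd \<xi>) * indicator {0..} x \<le> ennreal (p1 x) *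
            val lam p1 p2 g n (Suc t) (hs(t := \<xi>)) (ha(t := True)) (fst \<xi> + x, snd \<xi>) * indicator {0..} x"
      proof (cases "0 \<le> x")
        case True
        have "W lam p1 p2 n (fst \<xi> + x, snd \<xi>) \<le> val lam p1 p2 g n (Suc t) (hs(t := \<xi>)) (ha(t := True)) (fst \<xi> + x, snd \<xi>)"
          by (rule Suc.IH) (use Suc.prems True in auto)
        then show ?thesis by (intro mult_right_mono mult_left_mono) auto
      next
        case False
        then have "indicator {0..} x = (0::ennreal)" by (simp add: indicator_def)
        then show ?thesis by (simp only: mult_zero_right order.refl)
      qed
    qed
    then show ?thesis unfolding Q1_def reward_def if_True by (rule add_left_mono)
  qed
  have B: "Q0 lam p1 p2 n \<xi> \<le> ennreal (reward \<xi> False) + (\<integral>\<^sup>+ z\<in>{0..}. ennreal (p2 z) *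
            val lam p1 p2 g n (Suc t) (hs(t := \<xi>)) (ha(t := False)) (fst \<xi>, snd \<xi> + z) \<partial>lam)"
  proof -
    have "(\<integral>\<^sup>+ z\<in>{0..}. ennreal (p2 z) * W lam p1 p2 n (fst \<xi>, snd \<xi> + z) \<partial>lam) \<le> (\<integral>\<^sup>+ z\<in>{0..}. ennreal (p2 z) *
            val lam p1 p2 g n (Suc t) (hs(t := \<xi>)) (ha(t := False)) (fst \<xi>, snd \<xi> + z) \<partial>lam)"
    proof (rule nn_integral_mono)
      fix x
      show "ennreal (p2 x) * W lam p1 p2 n (fst \<xi>, snd \<xi> + x) * indicator {0..} x \<le> ennreal (p2 x) *
            val lam p1 p2 g n (Suc t) (hs(t := \<xi>)) (ha(t := False)) (fst \<xi>, snd \<xi> + x) * indicator {0..} x"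
      proof (cases "0 \<le> x")
        case True
        have "W lam p1 p2 n (fst \<xi>, snd \<xi> + x) \<le> val lam p1 p2 g n (Suc t) (hs(t := \<xi>)) (ha(t := False)) (fst \<xi>, snd \<xi> + x)"
          by (rule Suc.IH) (use Suc.prems True in auto)
        then show ?thesis by (intro mult_right_mono mult_left_mono) auto
      next
        case False
        then have "indicator {0..} x = (0::ennreal)" by (simp add: indicator_def)
        then show ?thesis by (simp only: mult_zero_right order.refl)
      qed
    qed
    then show ?thesis unfolding Q0_def reward_def if_False by (rule add_left_mono)
  qed
  have M1: "a \<le> b \<Longrightarrow> Q0 lam p1 p2 n (a, b) \<le> Q1 lam p1 p2 n (a, b)"
    using main[OF sl sf d1 d2 a] .
  have M2: "b \<le> a \<Longrightarrow> Q1 lam p1 p2 n (a, b) \<le> Q0 lam p1 p2 n (a, b)"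
    unfolding Q_swap[of lam p1 p2 n a b] Q_swap2[of lam p1 p2 n a b] by (rule main[OF sl sf d2 d1 b])
  have "W lam p1 p2 (Suc n) \<xi> \<le> ennreal ?q * Q1 lam p1 p2 n \<xi> + ennreal (1 - ?q) * Q0 lam p1 p2 n \<xi>"
  proof (cases "a < b")
    case True
    then have "?q = 1" using gg[where t=t and hs=hs and ha=ha and \<xi>=\<xi>] ab by simp
    then show ?thesis using M1 True ab by (simp del: W.simps add: W_Suc' max_absorb1)
  next
    case False
    show ?thesis
    proof (cases "b < a")
      case True
      then have "?q = 0" using gg[where t=t and hs=hs and ha=ha and \<xi>=\<xi>] ab by simp
      then show ?thesis using M2 True ab by (simp del: W.simps add: W_Suc' max_absorb2)
    next
      case False
      with \<open>\<not> a < b\<close> have "a = b" by auto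
      then have e: "Q0 lam p1 p2 n \<xi> = Q1 lam p1 p2 n \<xi>" using M1 M2 ab by (auto intro: antisym)
      have "ennreal ?q * Q1 lam p1 p2 n \<xi> + ennreal (1 - ?q) * Q0 lam p1 p2 n \<xi>
          = (ennreal ?q + ennreal (1 - ?q)) * Q1 lam p1 p2 n \<xi>" by (simp add: e distrib_right)
      also have "\<dots> = Q1 lam p1 p2 n \<xi>" using q by (simp add: ennreal_plus[symmetric])
      finally show ?thesis using e by (simp del: W.simps add: W_Suc')
    qed
  qed
  also have "\<dots> \<le> val lam p1 p2 g (Suc n) t hs ha \<xi>"
    unfolding val.simps by (intro add_mono mult_left_mono A B) auto
  finally show ?case .
qed

theorem theorem2p1:
  fixes lam :: "real measure" and p1 p2 :: "real \<Rightarrow> real" and \<theta> :: real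
    and g :: policy and N :: nat and \<xi>0 :: state
  assumes "sets lam = sets borel" and "sigma_finite_measure lam"
    and "\<theta> \<ge> 0"
    and "density_with_mean lam p1 \<theta>" and "density_with_mean lam p2 \<theta>"
    and "greedy_policy g"
    and "N \<ge> 1" and "fst \<xi>0 \<ge> 0" and "snd \<xi>0 \<ge> 0"
  shows "\<forall>\<pi>. admissible_policy \<pi> \<longrightarrow>
           total_reward lam p1 p2 \<pi> N \<xi>0 \<le> total_reward lam p1 p2 g N \<xi>0"
proof (intro allI impI)
  fix \<pi> assume "admissible_policy \<pi>"
  then have "total_reward lam p1 p2 \<pi> N \<xi>0 \<le> W lam p1 p2 N \<xi>0"
    unfolding total_reward_def by (rule upper)
  also have "\<dots> \<le> total_reward lam p1 p2 g N \<xi>0"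
    unfolding total_reward_def by (rule lower[OF assms(1,2,4,5,6)]) (use assms in auto)
  finally show "total_reward lam p1 p2 \<pi> N \<xi>0 \<le> total_reward lam p1 p2 g N \<xi>0" .
qed

end
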